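(* There is an absolute constant $C>0$ such that the following holds. Let $n,d$ be positive integers and let $E$ be a nonempty family of subsets of $[n]=\{1,\dots,n\}$, each of size at most $d$. For every positive integer $p\le d-1$ there exists a non-adaptive group testing algorithm for $E$ consisting of $t\le C\,\frac{d}{p}\log|E|$ tests, i.e. pools $T_1,\dots,T_t\subseteq[n]$, which allows to discard all hyperedges $e\in E$ with $|e\setminus e^*|\ge p$, where $e^*$ is the defective hyperedge: for every $e^*\in E$ and every $e\in E$ with $|e\setminus e^*|\ge p$ one has $r(e)\neq r(e^* )$.
   Context: Group testing on a hypergraph: the set of items is $[n]$, and $E$ is a family of subsets of $[n]$ (hyperedges), exactly one of which, $e^*\in E$, is the unknown defective hyperedge. A test on a pool $T\subseteq[n]$ gives a positive response iff $T\cap e^*\neq\emptyset$. A non-adaptive algorithm with $t$ tests is a sequence of pools $T_1,\dots,T_t\subseteq[n]$ fixed in advance (all tested in parallel); for $f\in E$ its response vector is $r(f)=(r_1,\dots,r_t)\in\{0,1\}^t$ with $r_i=1$ iff $T_i\cap f\neq\emptyset$. A hyperedge $e$ can be discarded when $e^*$ is defective if the observed responses are inconsistent with $e$ being defective, i.e. $r(e)\neq r(e^* )$. Logarithms are to a fixed base (e.g. base 2). *)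

theory Defs
  imports Complex_Main
begin

definition response :: "nat set list \<Rightarrow> nat set \<Rightarrow> bool list" where
  "response Ts f = map (\<lambda>T. T \<inter> f \<noteq> {}) Ts"

end

theory Submission
  imports Defs "HOL-Library.FuncSet"
begin

lemma key_ineq:
  fixes d a b p :: nat
  assumes d: "d \<ge> 2" and a: "a \<le> d" and pb: "p \<le> b" and pd: "p \<le> d"
  shows "real p / (18 * real d) \<le> (1 - 1/real d)^a * (1 - (1 - 1/real d)^b)"
proof -
  define r where "r = 1 - 1/real d"
  have r0: "0 \<le> r" and r1: "r \<le> 1" using d by (auto simp: r_def)
  have "real d / (real d - 1) = 1 + 1/(real d - 1)" using d by (simp add: field_simps)
  also have "\<dots> \<le> exp (1/(real d - 1))" by (rule exp_ge_add_one_self)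
  finally have q1: "real d / (real d - 1) \<le> exp (1/(real d - 1))" .
  have "(real d / (real d - 1))^d \<le> exp (1/(real d - 1))^d"
    by (rule power_mono[OF q1]) (use d in simp)
  also have "\<dots> = exp (real d/(real d - 1))" by (simp add: exp_of_nat_mult[symmetric])
  also have "\<dots> \<le> exp 2" using d by (simp add: field_simps)
  also have "\<dots> = exp 1 ^ 2" by (simp add: exp_of_nat_mult[symmetric])
  also have "\<dots> \<le> 3^2" by (rule power_mono[OF exp_le]) simp
  finally have q2: "(real d / (real d - 1))^d \<le> 9" by simp
  have rinv: "r = 1 / (real d / (real d - 1))" using d by (simp add: r_def field_simps)
  have "r^d = 1 / (real d / (real d - 1))^d" by (simp add: rinv power_divide)
  also have "\<dots> \<ge> 1/9" using q2 d by (intro divide_left_mono) auto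
  finally have rd: "1/9 \<le> r^d" .
  have ra: "r^d \<le> r^a" using r0 r1 a by (simp add: power_decreasing)
  have "r \<le> exp (-(1/real d))" unfolding r_def using exp_ge_add_one_self[of "-(1/real d)"] by simp
  hence "r^p \<le> exp (-(1/real d))^p" using r0 by (intro power_mono) auto
  also have "\<dots> = exp (- (real p / real d))" by (simp add: exp_of_nat_mult[symmetric])
  also have "\<dots> = 1 / exp (real p / real d)" by (simp add: exp_minus field_simps)
  also have "\<dots> \<le> 1 / (1 + real p / real d)"
    by (intro divide_left_mono) (auto intro!: mult_pos_pos add_pos_nonneg)
  finally have rp: "r^p \<le> 1 / (1 + real p / real d)" .
  have rb: "r^b \<le> r^p" using r0 r1 pb by (simp add: power_decreasing)
  have y1: "real p / real d \<le> 1" using pd d by simp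
  have "real p / (2 * real d) \<le> 1 - 1 / (1 + real p / real d)"
    using y1 d pd by (simp add: field_simps mult_right_mono)
  also have "\<dots> \<le> 1 - r^b" using rp rb by simp
  finally have q3: "real p / (2 * real d) \<le> 1 - r^b" .
  have "real p / (18 * real d) = (1/9) * (real p / (2 * real d))" by simp
  also have "\<dots> \<le> r^a * (1 - r^b)"
    using rd ra q3 by (intro mult_mono) auto
  finally show ?thesis by (simp add: r_def)
qed

lemma card_PiE_if:
  fixes n d :: nat and S :: "nat set"
  assumes "S \<subseteq> {1..n}" "d \<ge> 1"
  shows "card (PiE {1..n} (\<lambda>x. if x \<in> S then {2..d} else {1..d})) = (d-1)^card S * d^(n - card S)"
proof -
  have "card (PiE {1..n} (\<lambda>x. if x \<in> S then {2..d} else {1..d}))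
      = (\<Prod>x\<in>{1..n}. card (if x \<in> S then {2..d} else {1..d}))" by (simp add: card_PiE)
  also have "\<dots> = (\<Prod>x\<in>{1..n}. if x \<in> S then d - 1 else d)" by (rule prod.cong) auto
  also have "\<dots> = (d-1)^card ({1..n} \<inter> S) * d^card ({1..n} - S)"
    by (simp add: prod.If_cases Diff_eq)
  also have "{1..n} \<inter> S = S" using assms by auto
  also have "card ({1..n} - S) = n - card S" using assms by (simp add: card_Diff_subset finite_subset)
  finally show ?thesis .
qed

lemma mem_PiE_if:
  fixes d :: nat
  shows "h \<in> PiE I (\<lambda>x. if x \<in> S then {2..d} else {1..d}) \<longleftrightarrow>
         h \<in> PiE I (\<lambda>_. {1..d}) \<and> (\<forall>x\<in>S \<inter> I. h x \<noteq> 1)"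
proof -
  have "(\<forall>i\<in>I. h i \<in> (if i \<in> S then {2..d} else {1..d})) \<longleftrightarrow>
        (\<forall>i\<in>I. h i \<in> {1..d}) \<and> (\<forall>x\<in>S \<inter> I. h x \<noteq> 1)"
  proof (intro iffI conjI ballI)
    fix i assume H: "\<forall>i\<in>I. h i \<in> (if i \<in> S then {2..d} else {1..d})" and i: "i \<in> I"
    from H i show "h i \<in> {1..d}" by (cases "i \<in> S") auto
  next
    fix i assume H: "\<forall>i\<in>I. h i \<in> (if i \<in> S then {2..d} else {1..d})" and i: "i \<in> S \<inter> I"
    from H i show "h i \<noteq> 1" by auto
  next
    fix i assume H: "(\<forall>i\<in>I. h i \<in> {1..d}) \<and> (\<forall>x\<in>S \<inter> I. h x \<noteq> 1)" and i: "i \<in> I"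
    show "h i \<in> (if i \<in> S then {2..d} else {1..d})"
    proof (cases "i \<in> S")
      case True
      with H i have "1 \<le> h i" "h i \<le> d" "h i \<noteq> 1" by auto
      thus ?thesis using True by simp
    next
      case False
      with H i show ?thesis by simp
    qed
  qed
  thus ?thesis unfolding PiE_iff by blast
qed

lemma eqtest:
  fixes d n :: nat
  assumes A: "A \<subseteq> {1..n}" and B: "B \<subseteq> {1..n}"
  shows "{h \<in> PiE {1..n} (\<lambda>_. {1..d}). (\<forall>x\<in>A. h x \<noteq> 1) \<and> (\<exists>x\<in>B. h x = 1)} =
    PiE {1..n} (\<lambda>x. if x \<in> A then {2..d} else {1..d}) - PiE {1..n} (\<lambda>x. if x \<in> A \<union> B then {2..d} else {1..d})"
proof -
  have a: "A \<inter> {1..n} = A" and ab: "(A \<union> B) \<inter> {1..n} = A \<union> B" using A B by auto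
  have s1: "h \<in> PiE {1..n} (\<lambda>x. if x \<in> A then {2..d} else {1..d}) \<longleftrightarrow> h \<in> PiE {1..n} (\<lambda>_. {1..d}) \<and> (\<forall>x\<in>A. h x \<noteq> 1)" for h
    using mem_PiE_if[of h "{1..n}" A d] a by simp
  have s2: "h \<in> PiE {1..n} (\<lambda>x. if x \<in> A \<union> B then {2..d} else {1..d}) \<longleftrightarrow> h \<in> PiE {1..n} (\<lambda>_. {1..d}) \<and> (\<forall>x\<in>A \<union> B. h x \<noteq> 1)" for h
    using mem_PiE_if[of h "{1..n}" "A \<union> B" d] ab by simp
  show ?thesis
  proof (rule set_eqI)
    fix h
    show "h \<in> {h \<in> PiE {1..n} (\<lambda>_. {1..d}). (\<forall>x\<in>A. h x \<noteq> 1) \<and> (\<exists>x\<in>B. h x = 1)} \<longleftrightarrow>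
      h \<in> PiE {1..n} (\<lambda>x. if x \<in> A then {2..d} else {1..d}) - PiE {1..n} (\<lambda>x. if x \<in> A \<union> B then {2..d} else {1..d})"
      unfolding Diff_iff s1 s2 mem_Collect_eq by blast
  qed
qed
lemma count_sep:
  fixes n d p :: nat and A B :: "nat set"
  assumes d: "d \<ge> 2" and A: "A \<subseteq> {1..n}" and B: "B \<subseteq> {1..n}" and AB: "A \<inter> B = {}"
    and cA: "card A \<le> d" and pB: "p \<le> card B" and pd: "p \<le> d"
  shows "real p / (18 * real d) * card (PiE {1..n} (\<lambda>_. {1..d}))
     \<le> card {h \<in> PiE {1..n} (\<lambda>_. {1..d}). (\<forall>x\<in>A. h x \<noteq> 1) \<and> (\<exists>x\<in>B. h x = 1)}"
proof -
  define \<Omega> where "\<Omega> = PiE {1..n} (\<lambda>_. {1..(d::nat)})"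
  define S1 where "S1 = PiE {1..n} (\<lambda>x. if x \<in> A then {2..d} else {1..d})"
  define S2 where "S2 = PiE {1..n} (\<lambda>x. if x \<in> A \<union> B then {2..d} else {1..d})"
  have eq: "{h \<in> \<Omega>. (\<forall>x\<in>A. h x \<noteq> 1) \<and> (\<exists>x\<in>B. h x = 1)} = S1 - S2"
    unfolding \<Omega>_def S1_def S2_def using A B by (rule eqtest)
  have sub: "S2 \<subseteq> S1" unfolding S1_def S2_def by (rule PiE_mono) auto
  have fin: "finite S2" unfolding S2_def by (rule finite_PiE) auto
  have cO: "card \<Omega> = d^n" unfolding \<Omega>_def by (simp add: card_PiE)
  have fA: "finite A" "finite B" using A B finite_subset by auto
  have cAB: "card (A \<union> B) = card A + card B" using fA AB by (simp add: card_Un_disjoint)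
  have c1: "card S1 = (d-1)^card A * d^(n - card A)" unfolding S1_def
    using A d by (intro card_PiE_if) auto
  have c2: "card S2 = (d-1)^(card A + card B) * d^(n - (card A + card B))" unfolding S2_def
    using A B d cAB card_PiE_if[of "A \<union> B" n d] by auto
  have nAB: "card A + card B \<le> n" using cAB card_mono[OF _ Un_least[OF A B]] by simp
  define r where "r = 1 - 1/real d"
  have rr: "real (d - 1) = real d * r" using d by (simp add: r_def field_simps of_nat_diff)
  have R1: "real (card S1) = real d ^ n * r ^ card A"
  proof -
    have "real (card S1) = (real d * r)^card A * real d^(n - card A)" by (simp only: c1 of_nat_mult of_nat_power rr)
    also have "\<dots> = r^card A * real d^(card A + (n - card A))" by (simp add: power_add power_mult_distrib)
    also have "card A + (n - card A) = n" using nAB by simp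
    finally show ?thesis by simp
  qed
  have R2: "real (card S2) = real d ^ n * r ^ (card A + card B)"
  proof -
    have "real (card S2) = (real d * r)^(card A + card B) * real d^(n - (card A + card B))" by (simp only: c2 of_nat_mult of_nat_power rr)
    also have "\<dots> = r^(card A + card B) * real d^((card A + card B) + (n - (card A + card B)))"
      by (simp only: power_add power_mult_distrib) (simp add: algebra_simps)
    also have "(card A + card B) + (n - (card A + card B)) = n" using nAB by simp
    finally show ?thesis by simp
  qed
  have "real (card (S1 - S2)) = real (card S1) - real (card S2)"
  proof -
    have fin1: "finite S1" unfolding S1_def by (rule finite_PiE) auto
    have le: "card S2 \<le> card S1" by (rule card_mono[OF fin1 sub])
    show ?thesis using sub fin le by (simp add: card_Diff_subset of_nat_diff)
  qed
  also have "\<dots> = real d ^ n * (r^card A * (1 - r^card B))" by (simp add: R1 R2 power_add algebra_simps)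
  finally have X: "real (card (S1 - S2)) = real d ^ n * (r^card A * (1 - r^card B))" .
  have K: "real p / (18 * real d) \<le> r^card A * (1 - r^card B)"
    unfolding r_def by (rule key_ineq[OF d cA pB pd])
  have "real p / (18 * real d) * card \<Omega> \<le> real d ^ n * (r^card A * (1 - r^card B))"
  proof -
    have "real p / (18 * real d) * card \<Omega> = real d ^ n * (real p / (18 * real d))" by (simp add: cO)
    also have "\<dots> \<le> real d ^ n * (r^card A * (1 - r^card B))" using K by (intro mult_left_mono) auto
    finally show ?thesis .
  qed
  thus ?thesis using X eq unfolding \<Omega>_def by simp
qed

lemma averaging:
  assumes fO: "finite \<Omega>" and nO: "\<Omega> \<noteq> {}" and fR: "finite R"
    and H: "\<forall>\<pi>\<in>R. \<alpha> * real (card \<Omega>) \<le> real (card {h\<in>\<Omega>. sep h \<pi>})"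
  shows "\<exists>h\<in>\<Omega>. \<alpha> * real (card R) \<le> real (card {\<pi>\<in>R. sep h \<pi>})"
proof (rule ccontr)
  assume "\<not> ?thesis"
  hence lt: "\<forall>h\<in>\<Omega>. real (card {\<pi>\<in>R. sep h \<pi>}) < \<alpha> * real (card R)" by auto
  have cnt: "\<And>A P. finite A \<Longrightarrow> real (card {x\<in>A. P x}) = (\<Sum>x\<in>A. if P x then 1 else 0)"
    by (simp add: sum.If_cases Int_def)
  have "(\<Sum>h\<in>\<Omega>. real (card {\<pi>\<in>R. sep h \<pi>})) < (\<Sum>h\<in>\<Omega>. \<alpha> * real (card R))"
    using lt fO nO by (intro sum_strict_mono) auto
  also have "\<dots> = (\<Sum>\<pi>\<in>R. \<alpha> * real (card \<Omega>))" by simp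
  also have "\<dots> \<le> (\<Sum>\<pi>\<in>R. real (card {h\<in>\<Omega>. sep h \<pi>}))" using H by (intro sum_mono) auto
  also have "\<dots> = (\<Sum>\<pi>\<in>R. \<Sum>h\<in>\<Omega>. if sep h \<pi> then 1 else 0)" using fO by (simp add: cnt)
  also have "\<dots> = (\<Sum>h\<in>\<Omega>. \<Sum>\<pi>\<in>R. if sep h \<pi> then 1 else 0)" by (rule sum.swap)
  also have "\<dots> = (\<Sum>h\<in>\<Omega>. real (card {\<pi>\<in>R. sep h \<pi>}))" using fR by (simp add: cnt)
  finally show False by simp
qed

lemma iterate:
  assumes fO: "finite \<Omega>" and nO: "\<Omega> \<noteq> {}" and fP: "finite P" and a1: "\<alpha> \<le> 1"
    and H: "\<forall>\<pi>\<in>P. \<alpha> * real (card \<Omega>) \<le> real (card {h\<in>\<Omega>. sep h \<pi>})"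
  shows "\<exists>hs. length hs = k \<and> set hs \<subseteq> \<Omega> \<and>
     real (card {\<pi>\<in>P. \<forall>h\<in>set hs. \<not> sep h \<pi>}) \<le> (1 - \<alpha>)^k * real (card P)"
proof (induction k)
  case 0
  show ?case by (rule exI[of _ "[]"]) simp
next
  case (Suc k)
  then obtain hs where hs: "length hs = k" "set hs \<subseteq> \<Omega>"
    "real (card {\<pi>\<in>P. \<forall>h\<in>set hs. \<not> sep h \<pi>}) \<le> (1 - \<alpha>)^k * real (card P)" by blast
  define R where "R = {\<pi>\<in>P. \<forall>h\<in>set hs. \<not> sep h \<pi>}"
  have fR: "finite R" using fP by (simp add: R_def)
  obtain h where h: "h \<in> \<Omega>" "\<alpha> * real (card R) \<le> real (card {\<pi>\<in>R. sep h \<pi>})"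
    using averaging[OF fO nO fR, of \<alpha> sep] H by (auto simp: R_def)
  have split: "card R = card {\<pi>\<in>R. sep h \<pi>} + card {\<pi>\<in>R. \<not> sep h \<pi>}"
  proof -
    have "R = {\<pi>\<in>R. sep h \<pi>} \<union> {\<pi>\<in>R. \<not> sep h \<pi>}" by auto
    also have "card \<dots> = card {\<pi>\<in>R. sep h \<pi>} + card {\<pi>\<in>R. \<not> sep h \<pi>}"
      using fR by (intro card_Un_disjoint) auto
    finally show ?thesis .
  qed
  have eqR: "{\<pi>\<in>P. \<forall>g\<in>set (h # hs). \<not> sep g \<pi>} = {\<pi>\<in>R. \<not> sep h \<pi>}" by (auto simp: R_def)
  have "real (card {\<pi>\<in>R. \<not> sep h \<pi>}) \<le> (1 - \<alpha>) * real (card R)"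
    using h(2) split by (simp add: algebra_simps)
  also have "\<dots> \<le> (1 - \<alpha>) * ((1 - \<alpha>)^k * real (card P))"
    using hs(3) a1 by (intro mult_left_mono) (auto simp: R_def)
  finally show ?case using hs h eqR
    by (intro exI[of _ "h # hs"]) auto
qed


theorem theorem2:
  shows "\<exists>C::real. C > 0 \<and>
    (\<forall>(n::nat) (d::nat) (p::nat) (E::nat set set).
       n > 0 \<and> d > 0 \<and> E \<noteq> {} \<and> (\<forall>e\<in>E. e \<subseteq> {1..n} \<and> card e \<le> d)
       \<and> 0 < p \<and> p \<le> d - 1 \<longrightarrow>
       (\<exists>Ts::nat set list.
          set Ts \<subseteq> Pow {1..n} \<and>
          real (length Ts) \<le> C * (real d / real p) * log 2 (real (card E)) \<and>
          (\<forall>estar\<in>E. \<forall>e\<in>E. card (e - estar) \<ge> p \<longrightarrow> response Ts e \<noteq> response Ts estar)))"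
proof (rule exI[of _ 37], intro conjI allI impI)
  fix n d p :: nat and E :: "nat set set"
  assume asm: "n > 0 \<and> d > 0 \<and> E \<noteq> {} \<and> (\<forall>e\<in>E. e \<subseteq> {1..n} \<and> card e \<le> d) \<and> 0 < p \<and> p \<le> d - 1"
  hence nE: "E \<noteq> {}" and Esub: "\<forall>e\<in>E. e \<subseteq> {1..n}" and Ecard: "\<forall>e\<in>E. card e \<le> d"
    and p0: "0 < p" and pd1: "p \<le> d - 1" by auto
  have d2: "d \<ge> 2" and pd: "p \<le> d" using p0 pd1 by auto
  have fE: "finite E" using Esub by (intro finite_subset[of E "Pow {1..n}"]) auto
  define N where "N = card E"
  have N1: "N \<ge> 1" using fE nE by (simp add: N_def Suc_le_eq card_gt_0_iff)
  show "\<exists>Ts::nat set list.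
          set Ts \<subseteq> Pow {1..n} \<and>
          real (length Ts) \<le> 37 * (real d / real p) * log 2 (real (card E)) \<and>
          (\<forall>estar\<in>E. \<forall>e\<in>E. card (e - estar) \<ge> p \<longrightarrow> response Ts e \<noteq> response Ts estar)"
  proof (cases "N = 1")
    case True
    then obtain x where Ex: "E = {x}" by (auto simp: N_def card_Suc_eq)
    show ?thesis using p0 by (intro exI[of _ "[]"]) (auto simp: Ex)
  next
    case False
    hence N2: "N \<ge> 2" using N1 by simp
    define \<Omega> where "\<Omega> = PiE {1..n} (\<lambda>_. {1..d})"
    define test where "test h = {x\<in>{1..n}. h x = (1::nat)}" for h :: "nat \<Rightarrow> nat"
    define P where "P = {\<pi> \<in> E \<times> E. p \<le> card (snd \<pi> - fst \<pi>)}"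
    define sep where "sep h \<pi> = (test h \<inter> fst \<pi> = {} \<and> test h \<inter> snd \<pi> \<noteq> {})" for h \<pi>
    define \<alpha> where "\<alpha> = real p / (18 * real d)"
    have fO: "finite \<Omega>" unfolding \<Omega>_def by (rule finite_PiE) auto
    have nO: "\<Omega> \<noteq> {}" unfolding \<Omega>_def using d2 by (simp add: PiE_eq_empty_iff)
    have fP: "finite P" using fE by (simp add: P_def)
    have a1: "\<alpha> \<le> 1" and a0: "\<alpha> > 0" using pd p0 d2 by (auto simp: \<alpha>_def)
    have H: "\<forall>\<pi>\<in>P. \<alpha> * real (card \<Omega>) \<le> real (card {h\<in>\<Omega>. sep h \<pi>})"
    proof
      fix \<pi> assume "\<pi> \<in> P"
      then obtain es e where pi: "\<pi> = (es, e)" "es \<in> E" "e \<in> E" "p \<le> card (e - es)"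
        by (auto simp: P_def)
      have es: "es \<subseteq> {1..n}" and e: "e \<subseteq> {1..n}" using pi Esub by auto
      have eq: "{h\<in>\<Omega>. sep h \<pi>} = {h \<in> \<Omega>. (\<forall>x\<in>es. h x \<noteq> 1) \<and> (\<exists>x\<in>e - es. h x = 1)}"
      proof -
        have "sep h \<pi> \<longleftrightarrow> (\<forall>x\<in>es. h x \<noteq> 1) \<and> (\<exists>x\<in>e - es. h x = 1)" for h
        proof -
          have t1: "test h \<inter> es = {} \<longleftrightarrow> (\<forall>x\<in>es. h x \<noteq> 1)"
            using es unfolding test_def by (auto simp: subset_iff)
          have t2: "(\<forall>x\<in>es. h x \<noteq> 1) \<Longrightarrow> test h \<inter> e \<noteq> {} \<longleftrightarrow> (\<exists>x\<in>e - es. h x = 1)"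
            using e unfolding test_def by (auto simp: subset_iff)
          have "sep h \<pi> = (test h \<inter> es = {} \<and> test h \<inter> e \<noteq> {})" by (simp add: sep_def pi(1))
          thus ?thesis using t1 t2 by auto
        qed
        thus ?thesis by (intro Collect_cong) auto
      qed
      show "\<alpha> * real (card \<Omega>) \<le> real (card {h\<in>\<Omega>. sep h \<pi>})"
      proof -
        have "\<alpha> * real (card \<Omega>) \<le> real (card {h \<in> \<Omega>. (\<forall>x\<in>es. h x \<noteq> 1) \<and> (\<exists>x\<in>e - es. h x = 1)})"
          unfolding \<alpha>_def \<Omega>_def
          using pi es e Ecard d2 pd by (intro count_sep) auto
        thus ?thesis by (simp only: eq)
      qed
    qed
    define k where "k = nat \<lfloor>2 * ln (real N) / \<alpha>\<rfloor> + 1"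
    obtain hs where hs: "length hs = k" "set hs \<subseteq> \<Omega>"
      "real (card {\<pi>\<in>P. \<forall>h\<in>set hs. \<not> sep h \<pi>}) \<le> (1 - \<alpha>)^k * real (card P)"
      using iterate[OF fO nO fP a1 H] by blast
    have lnN: "ln (real N) \<ge> 0" using N1 by simp
    have kgt: "real k > 2 * ln (real N) / \<alpha>"
    proof -
      have "2 * ln (real N) / \<alpha> \<ge> 0" using lnN a0 by simp
      hence "real (nat \<lfloor>2 * ln (real N) / \<alpha>\<rfloor>) = of_int \<lfloor>2 * ln (real N) / \<alpha>\<rfloor>" by simp
      thus ?thesis unfolding k_def by linarith
    qed
    have cP: "real (card P) \<le> real N ^ 2"
    proof -
      have "card P \<le> card (E \<times> E)" using fE by (intro card_mono) (auto simp: P_def)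
      hence "card P \<le> N * N" by (simp add: card_cartesian_product N_def)
      hence "real (card P) \<le> real (N * N)" by (simp only: of_nat_le_iff)
      thus ?thesis by (simp add: power2_eq_square)
    qed
    have "(1 - \<alpha>)^k \<le> exp (-\<alpha>)^k"
      using a1 exp_ge_add_one_self[of "-\<alpha>"] by (intro power_mono) auto
    also have "\<dots> = exp (- (\<alpha> * real k))" by (simp add: exp_of_nat_mult[symmetric] mult.commute)
    also have "\<dots> < exp (- (2 * ln (real N)))"
      using kgt a0 by (simp add: field_simps)
    also have "\<dots> = 1 / real N ^ 2"
    proof -
      have "exp (2 * ln (real N)) = exp (ln (real N)) ^ 2" by (simp add: exp_of_nat_mult[symmetric])
      also have "\<dots> = real N ^ 2" using N1 by simp
      finally show ?thesis by (simp add: exp_minus divide_inverse)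
    qed
    finally have "(1 - \<alpha>)^k < 1 / real N ^ 2" .
    hence lt1: "(1 - \<alpha>)^k * real N ^ 2 < 1" using N1 by (simp add: field_simps)
    have "(1 - \<alpha>)^k * real (card P) \<le> (1 - \<alpha>)^k * real N ^ 2"
      using cP a1 by (intro mult_left_mono) auto
    hence "(1 - \<alpha>)^k * real (card P) < 1" using lt1 by linarith
    hence "real (card {\<pi>\<in>P. \<forall>h\<in>set hs. \<not> sep h \<pi>}) < 1" using hs(3) by linarith
    hence empty: "{\<pi>\<in>P. \<forall>h\<in>set hs. \<not> sep h \<pi>} = {}" using fP by simp
    define Ts where "Ts = map test hs"
    have S1: "set Ts \<subseteq> Pow {1..n}" by (auto simp: Ts_def test_def)
    have L1: "real (length Ts) \<le> 37 * (real d / real p) * log 2 (real (card E))"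
    proof -
      have l2: "0 < ln (2::real)" "ln (2::real) < 1" using ln_2_less_1 by auto
      have "ln (real N) * ln 2 \<le> ln (real N)" using lnN l2 by (simp add: mult_left_le)
      hence lg: "ln (real N) \<le> log 2 (real N)" using l2 by (simp add: log_def le_divide_eq)
      have lg1: "log 2 (real N) \<ge> 1"
      proof -
        have "log 2 (2::real) \<le> log 2 (real N)" using N2 by (subst log_le_cancel_iff) auto
        moreover have "log 2 (2::real) = 1" by (rule log_eq_one) auto
        ultimately show ?thesis by linarith
      qed
      have dp: "real d / real p \<ge> 1" using pd p0 by simp
      have one: "1 \<le> (real d / real p) * log 2 (real N)"
        using dp lg1 by (metis mult_mono' mult_1 zero_le_one)
      have k1: "real k \<le> 2 * ln (real N) / \<alpha> + 1" unfolding k_def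
        using lnN a0 by (simp add: of_nat_nat)
      have k2: "2 * ln (real N) / \<alpha> = 36 * ((real d / real p) * ln (real N))"
        using p0 d2 by (simp add: \<alpha>_def field_simps)
      have k3: "(real d / real p) * ln (real N) \<le> (real d / real p) * log 2 (real N)"
        using lg dp by (intro mult_left_mono) auto
      define X where "X = (real d / real p) * log 2 (real N)"
      define Y where "Y = (real d / real p) * ln (real N)"
      have "real k \<le> 36 * Y + 1" "Y \<le> X" "1 \<le> X" using one k1 k2 k3 by (simp_all add: X_def Y_def)
      hence "real k \<le> 37 * X" by linarith
      hence "real k \<le> 37 * (real d / real p) * log 2 (real N)" by (simp add: X_def)
      thus ?thesis by (simp add: Ts_def hs(1) N_def)
    qed
    have R: "\<forall>estar\<in>E. \<forall>e\<in>E. card (e - estar) \<ge> p \<longrightarrow> response Ts e \<noteq> response Ts estar"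
    proof (intro ballI impI)
      fix estar e assume "estar \<in> E" "e \<in> E" "card (e - estar) \<ge> p"
      hence "(estar, e) \<in> P" by (simp add: P_def)
      then obtain h where h: "h \<in> set hs" "sep h (estar, e)" using empty by blast
      hence T: "test h \<in> set Ts" "test h \<inter> estar = {}" "test h \<inter> e \<noteq> {}"
        by (auto simp: Ts_def sep_def)
      show "response Ts e \<noteq> response Ts estar"
      proof
        assume "response Ts e = response Ts estar"
        hence "\<forall>T\<in>set Ts. (T \<inter> e \<noteq> {}) = (T \<inter> estar \<noteq> {})"
          unfolding response_def map_eq_conv by blast
        thus False using T by blast
      qed
    qed
    show ?thesis by (rule exI[of _ Ts]) (intro conjI S1 L1 R)
  qed
qed (simp)

end
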